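(* Let $k$ be a positive integer and $C$ be a simplicial complex whose $1$-skeleton has a proper $2k$-colouring. Then $C$ has a proper edge-colouring with $2k-1$ colours.
   Context: An edge-colouring of a simplicial complex $C$ is proper if for every $2$-cell $f$ of $C$, any two distinct edges of $f$ receive distinct colours. *)

theory Defs
  imports Main
begin

definition simplicial_complex :: "'a set set \<Rightarrow> bool" where
  "simplicial_complex C \<longleftrightarrow>
     (\<forall>\<sigma>\<in>C. finite \<sigma> \<and> \<sigma> \<noteq> {}) \<and>
     (\<forall>\<sigma>\<in>C. \<forall>\<tau>. \<tau> \<subseteq> \<sigma> \<and> \<tau> \<noteq> {} \<longrightarrow> \<tau> \<in> C)"

definition vertices :: "'a set set \<Rightarrow> 'a set" where
  "vertices C = {v. {v} \<in> C}"

definition edges :: "'a set set \<Rightarrow> 'a set set" where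
  "edges C = {e \<in> C. card e = 2}"

definition cells2 :: "'a set set \<Rightarrow> 'a set set" where
  "cells2 C = {f \<in> C. card f = 3}"

definition proper_skeleton_colouring :: "'a set set \<Rightarrow> nat \<Rightarrow> ('a \<Rightarrow> nat) \<Rightarrow> bool" where
  "proper_skeleton_colouring C n c \<longleftrightarrow>
     (\<forall>v\<in>vertices C. c v < n) \<and>
     (\<forall>u v. {u, v} \<in> edges C \<longrightarrow> c u \<noteq> c v)"

definition proper_edge_colouring :: "'a set set \<Rightarrow> nat \<Rightarrow> ('a set \<Rightarrow> nat) \<Rightarrow> bool" where
  "proper_edge_colouring C n col \<longleftrightarrow>
     (\<forall>e\<in>edges C. col e < n) \<and>
     (\<forall>f\<in>cells2 C. \<forall>e1 e2. e1 \<in> edges C \<and> e2 \<in> edges C \<and> e1 \<subseteq> f \<and> e2 \<subseteq> f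
        \<and> e1 \<noteq> e2 \<longrightarrow> col e1 \<noteq> col e2)"

end

theory Submission
  imports Defs
begin

definition G :: "nat \<Rightarrow> nat set \<Rightarrow> nat" where
  "G m S = (if m \<in> S then (2 * (\<Sum>S - m)) mod m else (\<Sum>S) mod m)"

lemma mod2: "(x::nat) < 2*m \<Longrightarrow> x mod m = (if x < m then x else x - m)"
  by (metis le_mod_geq less_diff_conv2 mod_less mult_2 not_less)

lemma G_pair: "a \<noteq> b \<Longrightarrow> G m {a,b} = (if a = m then (2*b) mod m else if b = m then (2*a) mod m else (a+b) mod m)"
  by (auto simp: G_def)

lemma key0:
  fixes m a b d :: nat
  assumes "a \<le> m" "b \<le> m" "d \<le> m" "a \<noteq> b" "a \<noteq> d" "b \<noteq> d" "odd m"
  shows "G m {a,b} \<noteq> G m {a,d}"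
proof -
  have b1: "(2*x) mod m = (if 2*x < m then 2*x else 2*x - m)" if "x < m" for x
    using that by (intro mod2) simp
  have b2: "(x+y) mod m = (if x+y < m then x+y else x+y - m)" if "x < m" "y < m" for x y
    using that by (intro mod2) simp
  show ?thesis
  proof (cases "a = m")
    case True
    then have "b < m" "d < m" using assms by auto
    have "G m {a,b} = (if 2*b < m then 2*b else 2*b - m)" using assms True b1[of b] \<open>b < m\<close> G_pair[of a b m] by simp
    moreover have "G m {a,d} = (if 2*d < m then 2*d else 2*d - m)" using assms True b1[of d] \<open>d < m\<close> G_pair[of a d m] by simp
    moreover obtain j where "m = 2*j+1" using assms(7) oddE by blast
    ultimately show ?thesis using assms by (simp split: if_splits; arith)
  next
    case False
    then have a: "a < m" using assms by auto
    show ?thesis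
    proof (cases "b = m")
      case True
      then have "d < m" using assms by auto
      then show ?thesis using assms True a b1[of a] b2[of a d] G_pair[of a b m] G_pair[of a d m]
        by (simp split: if_splits)
    next
      case False
      then have b: "b < m" using assms by auto
      show ?thesis
      proof (cases "d = m")
        case True
        then show ?thesis using assms b a b1[of a] b2[of a b] G_pair[of a b m] G_pair[of a d m]
          by (simp split: if_splits)
      next
        case False
        then have "d < m" using assms by auto
        then show ?thesis using assms b a \<open>b \<noteq> m\<close> \<open>a \<noteq> m\<close> b2[of a b] b2[of a d]
          G_pair[of a b m] G_pair[of a d m]
          by (simp split: if_splits)
      qed
    qed
  qed
qed

lemma key:
  assumes "a < 2*k" "b < 2*k" "d < 2*k" "a \<noteq> b" "a \<noteq> d" "b \<noteq> d" "k > 0"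
  shows "G (2*k-1) {a,b} \<noteq> G (2*k-1) {a,d}"
  apply (rule key0) using assms by auto

theorem proposition7p1:
  fixes C :: "'a set set" and k :: nat
  assumes "k > 0"
    and "simplicial_complex C"
    and "\<exists>c. proper_skeleton_colouring C (2 * k) c"
  shows "\<exists>col. proper_edge_colouring C (2 * k - 1) col"
proof -
  obtain c where c: "proper_skeleton_colouring C (2 * k) c" using assms(3) by blast
  have sc1: "\<And>s. s \<in> C \<Longrightarrow> finite s" and sc2: "\<And>s t. s \<in> C \<Longrightarrow> t \<subseteq> s \<Longrightarrow> t \<noteq> {} \<Longrightarrow> t \<in> C"
    using assms(2) unfolding simplicial_complex_def by blast+
  have cv: "\<And>v. {v} \<in> C \<Longrightarrow> c v < 2*k" using c unfolding proper_skeleton_colouring_def vertices_def by auto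
  have ce: "\<And>u v. {u,v} \<in> C \<Longrightarrow> u \<noteq> v \<Longrightarrow> c u \<noteq> c v"
    using c unfolding proper_skeleton_colouring_def edges_def by (metis (mono_tags, lifting) card_2_iff mem_Collect_eq)
  define col where "col e = G (2*k-1) (c ` e)" for e
  have "proper_edge_colouring C (2 * k - 1) col"
    unfolding proper_edge_colouring_def
  proof (intro conjI ballI allI impI)
    fix e assume "e \<in> edges C"
    show "col e < 2*k-1" using assms(1) by (simp add: col_def G_def)
  next
    fix f e1 e2 assume f: "f \<in> cells2 C" and h: "e1 \<in> edges C \<and> e2 \<in> edges C \<and> e1 \<subseteq> f \<and> e2 \<subseteq> f \<and> e1 \<noteq> e2"
    have fC: "f \<in> C" and f3: "card f = 3" using f by (auto simp: cells2_def)
    obtain x y z where fx: "f = {x,y,z}" and d: "x \<noteq> y" "x \<noteq> z" "y \<noteq> z"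
      using f3 by (auto simp: card_3_iff)
    have "card e1 = 2" "card e2 = 2" using h by (auto simp: edges_def)
    then obtain u1 v1 u2 v2 where e1: "e1 = {u1,v1}" "u1 \<noteq> v1" and e2: "e2 = {u2,v2}" "u2 \<noteq> v2"
      by (meson card_2_iff)
    have "\<exists>p q r. e1 = {p,q} \<and> e2 = {p,r} \<and> p \<noteq> q \<and> p \<noteq> r \<and> q \<noteq> r \<and> {p,q,r} = f"
      using h e1 e2 d unfolding fx by auto
    then obtain p q r where pqr: "e1 = {p,q}" "e2 = {p,r}" "p \<noteq> q" "p \<noteq> r" "q \<noteq> r" "{p,q,r} = f" by blast
    have s: "\<And>t. t \<subseteq> {p,q,r} \<Longrightarrow> t \<noteq> {} \<Longrightarrow> t \<in> C" using sc2 fC pqr(6) by blast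
    have "c p < 2*k" "c q < 2*k" "c r < 2*k" using cv s by auto
    moreover have "c p \<noteq> c q" "c p \<noteq> c r" "c q \<noteq> c r" using ce s pqr by auto
    ultimately show "col e1 \<noteq> col e2" unfolding col_def pqr(1,2) using key assms(1) by simp
  qed
  then show ?thesis by blast
qed

end
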